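(* Let $u$ and $v$ be vertices of $T$ such that $u$ is a descendant of $v$ and $T^v$ is contained in $T^u$. Let $T'$ be the canonical subtree among the connected components of the forest obtained from $T^u$ by deleting $C_{T^u}$ which contains $v$, and let $X$ be the set of vertices in $C_{T^u}$ that are descendants of $v$ and ancestors of $u$. Let $x$ be the element of $X$ that is highest in $T$. Then either $rt(T')$ or $l(T')$ is the parent of $x$.
   Context: Let $T$ be a rooted tree on $n$ vertices with positive edge weights. Ancestor/descendant refer to $T$, and a vertex counts as its own ancestor and descendant. $T_v$ denotes the subtree of $T$ rooted at $v$. For every non-leaf vertex $v$ of $T$ fix a child $c_1(v)$ with $|T_{c_1(v)}|$ maximal among the children of $v$; the edges $(v,c_1(v))$ are called leftmost. A subtree $R$ of $T$ (connected subgraph) is rooted at its vertex closest to the root of $T$, denoted $rt(R)$, and inherits the leftmost labelling; $R_v$ is the subtree of $R$ rooted at $v$. For $v\in V(R)$, $P_R(v)$ is the longest downward path from $v$ in $R$ using only leftmost edges; its last vertex is $l(v)$, and $l(R):=l(rt(R))$. For an integer $d$, a vertex $v$ of $R$ is $d$-balanced (in $R$) if $|R_{c_1(v)}|\le |R|-d$ (where $|R_{c_1(v)}|=0$ if $c_1(v)$ is undefined or not in $R$). $b_d(v)$ is the first $d$-balanced vertex on $P_R(v)$, or NULL if none. Define $CV(R,d)=\emptyset$ if $b_d(rt(R))$ is NULL, and otherwise, with $b=b_d(rt(R))$, $CV(R,d)=\{b\}\cup\bigcup_{w}CV(R_w,d)$, the union over the children $w$ of $b$ in $R$. Fix an integer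 $k\ge 4$. For a subtree $R$ with $m$ vertices, $C_R:=V(R)$ if $k\ge m/2-1$, and otherwise $C_R:=CV(R,m/k)\cup\{l(R),rt(R)\}$. Canonical subtrees: $T$ is canonical; if $R$ is canonical, every connected component of the forest obtained from $R$ by deleting the vertices of $C_R$ (and incident edges) is canonical. Every vertex $v$ of $T$ belongs to $C_R$ for exactly one canonical subtree $R$, denoted $T^v$. *)

theory Defs
  imports Complex_Main
begin

text \<open>A rooted tree is given by a finite vertex set V, a root r and a parent
  function par (with the convention par r = r).  Edge weights play no role in
  the statement and are omitted.  Subtrees of T are represented by their vertex sets.\<close>

definition anc :: "('a \<Rightarrow> 'a) \<Rightarrow> 'a \<Rightarrow> 'a \<Rightarrow> bool" where
  "anc par a w \<longleftrightarrow> (\<exists>n. (par ^^ n) w = a)"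

definition is_rooted_tree :: "'a set \<Rightarrow> 'a \<Rightarrow> ('a \<Rightarrow> 'a) \<Rightarrow> bool" where
  "is_rooted_tree V r par \<longleftrightarrow> finite V \<and> r \<in> V \<and> par r = r \<and>
     (\<forall>v\<in>V. v \<noteq> r \<longrightarrow> par v \<in> V) \<and> (\<forall>v\<in>V. anc par r v)"

definition children :: "'a set \<Rightarrow> 'a \<Rightarrow> ('a \<Rightarrow> 'a) \<Rightarrow> 'a \<Rightarrow> 'a set" where
  "children V r par v = {w \<in> V. w \<noteq> r \<and> par w = v}"

definition sub :: "('a \<Rightarrow> 'a) \<Rightarrow> 'a set \<Rightarrow> 'a \<Rightarrow> 'a set" where
  "sub par R v = {w \<in> R. anc par v w}"

definition leftmost_choice :: "'a set \<Rightarrow> 'a \<Rightarrow> ('a \<Rightarrow> 'a) \<Rightarrow> ('a \<Rightarrow> 'a) \<Rightarrow> bool" where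
  "leftmost_choice V r par c1 \<longleftrightarrow> (\<forall>v\<in>V. children V r par v \<noteq> {} \<longrightarrow>
      c1 v \<in> children V r par v \<and>
      (\<forall>w\<in>children V r par v. card (sub par V w) \<le> card (sub par V (c1 v))))"

definition has_lm :: "'a set \<Rightarrow> 'a \<Rightarrow> ('a \<Rightarrow> 'a) \<Rightarrow> ('a \<Rightarrow> 'a) \<Rightarrow> 'a set \<Rightarrow> 'a \<Rightarrow> bool" where
  "has_lm V r par c1 R v \<longleftrightarrow> children V r par v \<noteq> {} \<and> c1 v \<in> R"

inductive onP :: "'a set \<Rightarrow> 'a \<Rightarrow> ('a \<Rightarrow> 'a) \<Rightarrow> ('a \<Rightarrow> 'a) \<Rightarrow> 'a set \<Rightarrow> 'a \<Rightarrow> 'a \<Rightarrow> bool"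
  for V r par c1 R where
  onP_start: "v \<in> R \<Longrightarrow> onP V r par c1 R v v"
| onP_step: "onP V r par c1 R v w \<Longrightarrow> has_lm V r par c1 R w \<Longrightarrow> onP V r par c1 R v (c1 w)"

definition lend :: "'a set \<Rightarrow> 'a \<Rightarrow> ('a \<Rightarrow> 'a) \<Rightarrow> ('a \<Rightarrow> 'a) \<Rightarrow> 'a set \<Rightarrow> 'a \<Rightarrow> 'a" where
  "lend V r par c1 R v = (THE w. onP V r par c1 R v w \<and> \<not> has_lm V r par c1 R w)"

definition rt :: "('a \<Rightarrow> 'a) \<Rightarrow> 'a set \<Rightarrow> 'a" where
  "rt par R = (THE t. t \<in> R \<and> (\<forall>w\<in>R. anc par t w))"

definition lR :: "'a set \<Rightarrow> 'a \<Rightarrow> ('a \<Rightarrow> 'a) \<Rightarrow> ('a \<Rightarrow> 'a) \<Rightarrow> 'a set \<Rightarrow> 'a" where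
  "lR V r par c1 R = lend V r par c1 R (rt par R)"

text \<open>d-balanced in R (d real, since it is instantiated with m/k).\<close>
definition balanced :: "'a set \<Rightarrow> 'a \<Rightarrow> ('a \<Rightarrow> 'a) \<Rightarrow> ('a \<Rightarrow> 'a) \<Rightarrow> 'a set \<Rightarrow> real \<Rightarrow> 'a \<Rightarrow> bool" where
  "balanced V r par c1 R d v \<longleftrightarrow>
     real (if has_lm V r par c1 R v then card (sub par R (c1 v)) else 0) \<le> real (card R) - d"

definition bfirst :: "'a set \<Rightarrow> 'a \<Rightarrow> ('a \<Rightarrow> 'a) \<Rightarrow> ('a \<Rightarrow> 'a) \<Rightarrow> 'a set \<Rightarrow> real \<Rightarrow> 'a \<Rightarrow> 'a option" where
  "bfirst V r par c1 R d v =
     (if \<exists>w. onP V r par c1 R v w \<and> balanced V r par c1 R d w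
      then Some (THE w. onP V r par c1 R v w \<and> balanced V r par c1 R d w \<and>
                   (\<forall>y. onP V r par c1 R v y \<and> balanced V r par c1 R d y \<longrightarrow> anc par w y))
      else None)"

text \<open>CV(R,d), as the least set closed under the recursive definition.\<close>
inductive inCV :: "'a set \<Rightarrow> 'a \<Rightarrow> ('a \<Rightarrow> 'a) \<Rightarrow> ('a \<Rightarrow> 'a) \<Rightarrow> 'a set \<Rightarrow> real \<Rightarrow> 'a \<Rightarrow> bool"
  for V r par c1 where
  inCV_b: "bfirst V r par c1 R d (rt par R) = Some b \<Longrightarrow> inCV V r par c1 R d b"
| inCV_rec: "bfirst V r par c1 R d (rt par R) = Some b \<Longrightarrow> w \<in> children V r par b \<Longrightarrow> w \<in> R \<Longrightarrow>
     inCV V r par c1 (sub par R w) d x \<Longrightarrow> inCV V r par c1 R d x"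

definition CV :: "'a set \<Rightarrow> 'a \<Rightarrow> ('a \<Rightarrow> 'a) \<Rightarrow> ('a \<Rightarrow> 'a) \<Rightarrow> 'a set \<Rightarrow> real \<Rightarrow> 'a set" where
  "CV V r par c1 R d = {x. inCV V r par c1 R d x}"

definition CR :: "'a set \<Rightarrow> 'a \<Rightarrow> ('a \<Rightarrow> 'a) \<Rightarrow> ('a \<Rightarrow> 'a) \<Rightarrow> nat \<Rightarrow> 'a set \<Rightarrow> 'a set" where
  "CR V r par c1 k R =
     (let m = card R in
      if real k \<ge> real m / 2 - 1 then R
      else CV V r par c1 R (real m / real k) \<union> {lR V r par c1 R, rt par R})"

definition adj_in :: "'a \<Rightarrow> ('a \<Rightarrow> 'a) \<Rightarrow> 'a set \<Rightarrow> 'a \<Rightarrow> 'a \<Rightarrow> bool" where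
  "adj_in r par A x y \<longleftrightarrow> x \<in> A \<and> y \<in> A \<and> ((x \<noteq> r \<and> par x = y) \<or> (y \<noteq> r \<and> par y = x))"

definition comps :: "'a \<Rightarrow> ('a \<Rightarrow> 'a) \<Rightarrow> 'a set \<Rightarrow> 'a set set" where
  "comps r par A = {K. \<exists>x\<in>A. K = {y. (adj_in r par A)\<^sup>*\<^sup>* x y}}"

inductive canonical :: "'a set \<Rightarrow> 'a \<Rightarrow> ('a \<Rightarrow> 'a) \<Rightarrow> ('a \<Rightarrow> 'a) \<Rightarrow> nat \<Rightarrow> 'a set \<Rightarrow> bool"
  for V r par c1 k where
  canon_T: "canonical V r par c1 k V"
| canon_comp: "canonical V r par c1 k R \<Longrightarrow> K \<in> comps r par (R - CR V r par c1 k R) \<Longrightarrow>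
     canonical V r par c1 k K"

end

theory Submission
  imports Defs
begin

locale ctree =
  fixes V :: "'a set" and r :: 'a and par :: "'a \<Rightarrow> 'a" and c1 :: "'a \<Rightarrow> 'a"
  assumes tree: "is_rooted_tree V r par"
    and lmc: "leftmost_choice V r par c1"
begin

lemma finV: "finite V" using tree unfolding is_rooted_tree_def by blast
lemma rV: "r \<in> V" using tree unfolding is_rooted_tree_def by blast
lemma par_r: "par r = r" using tree unfolding is_rooted_tree_def by blast
lemma anc_r: "v \<in> V \<Longrightarrow> anc par r v" using tree unfolding is_rooted_tree_def by blast

lemma parV: "v \<in> V \<Longrightarrow> par v \<in> V"
  using tree par_r rV unfolding is_rooted_tree_def by (cases "v = r") auto

lemma funpowV: "v \<in> V \<Longrightarrow> (par ^^ n) v \<in> V"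
  by (induction n) (auto simp: parV)

lemma funpow_r: "(par ^^ n) r = r"
  by (induction n) (auto simp: par_r)

lemma anc_refl[simp]: "anc par a a"
  unfolding anc_def by (metis funpow_0)

lemma anc_trans: "anc par a b \<Longrightarrow> anc par b c \<Longrightarrow> anc par a c"
  unfolding anc_def by (metis funpow_add o_apply)

lemma anc_par: "anc par (par b) b"
  unfolding anc_def by (rule exI[of _ 1]) simp

lemma anc_V: "anc par a b \<Longrightarrow> b \<in> V \<Longrightarrow> a \<in> V"
  unfolding anc_def using funpowV by blast

lemma anc_step: "anc par a b \<Longrightarrow> a \<noteq> b \<Longrightarrow> anc par a (par b)"
  unfolding anc_def
proof -
  assume "\<exists>n. (par ^^ n) b = a" "a \<noteq> b"
  then obtain n where n: "(par ^^ n) b = a" by blast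
  with \<open>a \<noteq> b\<close> obtain m where "n = Suc m" by (cases n) auto
  then have "(par ^^ m) (par b) = a" using n by (metis funpow_swap1 funpow.simps(2) o_apply)
  then show "\<exists>n. (par ^^ n) (par b) = a" by blast
qed

lemma cycle: assumes "v \<in> V" "(par ^^ n) v = v" "n > 0" shows "v = r"
proof -
  obtain m where m: "(par ^^ m) v = r" using anc_r[OF assms(1)] unfolding anc_def by blast
  have pw: "(par ^^ (n * j)) v = v" for j
  proof (induction j)
    case 0 then show ?case by simp
  next
    case (Suc j)
    have "n * Suc j = n * j + n" by simp
    then have "(par ^^ (n * Suc j)) v = (par ^^ (n * j)) ((par ^^ n) v)"
      by (simp only: funpow_add o_apply)
    then show ?case using Suc assms(2) by simp
  qed
  have "n * m \<ge> m" using assms(3) by simp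
  then have "(par ^^ (n * m)) v = (par ^^ (n * m - m)) ((par ^^ m) v)"
    by (metis funpow_add le_add_diff_inverse2 o_apply)
  then have "(par ^^ (n * m)) v = r" using m funpow_r by simp
  then show ?thesis using pw[of m] by simp
qed

lemma anc_antisym: assumes "anc par a b" "anc par b a" "b \<in> V" shows "a = b"
proof -
  obtain n where n: "(par ^^ n) b = a" using assms(1) unfolding anc_def by blast
  obtain m where m: "(par ^^ m) a = b" using assms(2) unfolding anc_def by blast
  have "(par ^^ (m + n)) b = b" using n m by (simp add: funpow_add)
  show ?thesis
  proof (cases "m + n = 0")
    case True then show ?thesis using n by simp
  next
    case False
    then have "b = r" using cycle[OF assms(3) \<open>(par ^^ (m + n)) b = b\<close>] by simp
    then show ?thesis using n funpow_r by simp
  qed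
qed

lemma par_ne: assumes "v \<in> V" "v \<noteq> r" shows "par v \<noteq> v"
  using cycle[OF assms(1), of 1] assms by auto

definition depth :: "'a \<Rightarrow> nat" where
  "depth v = (LEAST n. (par ^^ n) v = r)"

lemma depth_par: assumes "v \<in> V" "v \<noteq> r" shows "depth (par v) < depth v"
proof -
  have ex: "\<exists>n. (par ^^ n) v = r" using anc_r[OF assms(1)] unfolding anc_def by blast
  define n where "n = depth v"
  have n: "(par ^^ n) v = r" unfolding n_def depth_def using LeastI_ex[OF ex] .
  with assms(2) obtain m where mm: "n = Suc m" by (cases n) auto
  then have "(par ^^ m) (par v) = r" using n by (metis funpow_swap1 funpow.simps(2) o_apply)
  then have "depth (par v) \<le> m" unfolding depth_def by (rule Least_le)
  then show ?thesis using mm n_def by simp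
qed

end

context ctree begin

abbreviation "onp \<equiv> onP V r par c1"
abbreviation "hlm \<equiv> has_lm V r par c1"

lemma hlm_c1: assumes "hlm R w" "w \<in> V"
  shows "c1 w \<in> V" "par (c1 w) = w" "c1 w \<noteq> r" "c1 w \<in> R"
proof -
  have "c1 w \<in> children V r par w" using assms lmc unfolding leftmost_choice_def has_lm_def by blast
  then show "c1 w \<in> V" "par (c1 w) = w" "c1 w \<noteq> r" unfolding children_def by auto
  show "c1 w \<in> R" using assms(1) unfolding has_lm_def by blast
qed

lemma onp_R: "onp R v w \<Longrightarrow> w \<in> R \<and> v \<in> R"
  by (induction rule: onP.induct) (auto simp: has_lm_def)

lemma onp_anc: "onp R v w \<Longrightarrow> R \<subseteq> V \<Longrightarrow> anc par v w"
proof (induction rule: onP.induct)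
  case (onP_start v) then show ?case by simp
next
  case (onP_step v w)
  then have "w \<in> V" using onp_R by blast
  then have "par (c1 w) = w" using hlm_c1 onP_step by blast
  then have "anc par w (c1 w)" using anc_par by metis
  then show ?case using onP_step anc_trans by blast
qed

lemma onp_start_inv: "onp R v w \<Longrightarrow> w = v \<or> (hlm R v \<and> onp R (c1 v) w)"
proof (induction rule: onP.induct)
  case (onP_start v) then show ?case by simp
next
  case (onP_step v w)
  from onP_step.IH show ?case
  proof
    assume wv: "w = v"
    have "c1 w \<in> R" using onP_step(2) unfolding has_lm_def by blast
    then have "onp R (c1 w) (c1 w)" by (rule onP.onP_start)
    then show ?thesis using onP_step(2) wv by simp
  next
    assume "hlm R v \<and> onp R (c1 v) w"
    then have "hlm R v" "onp R (c1 v) w" by auto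
    then have "onp R (c1 v) (c1 w)" using onP.onP_step onP_step(2) by metis
    then show ?thesis using \<open>hlm R v\<close> by simp
  qed
qed

lemma onp_end_inv: assumes "onp R v w" shows "w = v \<or> (\<exists>w'. onp R v w' \<and> hlm R w' \<and> w = c1 w')"
  using assms
proof (cases rule: onP.cases)
  case onP_start then show ?thesis by simp
next
  case (onP_step w') then show ?thesis by blast
qed

lemma onp_trans: "onp R b c \<Longrightarrow> onp R a b \<Longrightarrow> onp R a c"
proof (induction rule: onP.induct)
  case (onP_start v) then show ?case by simp
next
  case (onP_step v w)
  then have "onp R a w" by simp
  then show ?case using onP_step(2) by (rule onP.onP_step)
qed

lemma onp_lin: "onp R v b \<Longrightarrow> onp R v a \<Longrightarrow> onp R a b \<or> onp R b a"
proof (induction rule: onP.induct)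
  case (onP_start v) then show ?case by simp
next
  case (onP_step v w)
  from onP_step.IH[OF onP_step.prems] show ?case
  proof
    assume "onp R a w"
    then have "onp R a (c1 w)" using onP_step(2) by (rule onP.onP_step)
    then show ?thesis by simp
  next
    assume "onp R w a"
    then have "a = w \<or> (hlm R w \<and> onp R (c1 w) a)" by (rule onp_start_inv)
    then show ?thesis
    proof
      assume aw: "a = w"
      have "w \<in> R" using onp_R[OF onP_step(1)] by simp
      then have "onp R w w" by (rule onP.onP_start)
      then have "onp R w (c1 w)" using onP_step(2) by (rule onP.onP_step)
      then show ?thesis using aw by simp
    next
      assume "hlm R w \<and> onp R (c1 w) a" then show ?thesis by simp
    qed
  qed
qed

lemma onp_antisym: "onp R a b \<Longrightarrow> onp R b a \<Longrightarrow> R \<subseteq> V \<Longrightarrow> a = b"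
proof -
  assume h: "onp R a b" "onp R b a" "R \<subseteq> V"
  have "anc par a b" by (rule onp_anc[OF h(1) h(3)])
  moreover have "anc par b a" by (rule onp_anc[OF h(2) h(3)])
  moreover have "b \<in> V" using onp_R[OF h(1)] h(3) by blast
  ultimately show "a = b" by (rule anc_antisym)
qed

lemma onp_mono: "onp R v w \<Longrightarrow> R \<subseteq> R' \<Longrightarrow> onp R' v w"
proof (induction rule: onP.induct)
  case (onP_start v) then have "v \<in> R'" by blast
  then show ?case by (rule onP.onP_start)
next
  case (onP_step v w)
  have "hlm R' w" using onP_step(2,4) unfolding has_lm_def by blast
  moreover have "onp R' v w" using onP_step by simp
  ultimately show ?case by (metis onP.onP_step)
qed

lemma lend_eq: assumes "onp R v e" "\<not> hlm R e" shows "lend V r par c1 R v = e"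
  unfolding lend_def
proof (rule the_equality)
  show "onp R v e \<and> \<not> hlm R e" using assms by simp
next
  fix e' assume e': "onp R v e' \<and> \<not> hlm R e'"
  then have "onp R e e' \<or> onp R e' e" using onp_lin[OF _ assms(1)] by simp
  then show "e' = e"
  proof
    assume "onp R e e'" then show ?thesis using onp_start_inv[of R e e'] assms(2) by auto
  next
    assume "onp R e' e" then show ?thesis using onp_start_inv[of R e' e] e' by auto
  qed
qed

lemma lend_ex: assumes "R \<subseteq> V" "onp R v q" shows "\<exists>e. onp R v e \<and> \<not> hlm R e"
  using assms(2)
proof (induction "card (sub par R q)" arbitrary: q rule: less_induct)
  case less
  show ?case
  proof (cases "hlm R q")
    case False then show ?thesis using less(2) by auto
  next
    case True
    have qV: "q \<in> V" using onp_R[OF less(2)] assms(1) by auto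
    note h = hlm_c1[OF True qV]
    have on: "onp R v (c1 q)" using less(2) True by (rule onP.onP_step)
    have fin: "finite (sub par R q)" using finite_subset[OF assms(1) finV] unfolding sub_def by simp
    have aq: "anc par q (c1 q)" using h(2) anc_par by metis
    then have ss: "sub par R (c1 q) \<subseteq> sub par R q" unfolding sub_def
      using anc_trans by blast
    have qin: "q \<in> sub par R q" using onp_R[OF less(2)] unfolding sub_def by auto
    have qn: "q \<notin> sub par R (c1 q)"
    proof
      assume "q \<in> sub par R (c1 q)"
      then have "anc par (c1 q) q" unfolding sub_def by blast
      then have "c1 q = q" using anc_antisym aq qV by blast
      then show False using h par_ne by metis
    qed
    have "card (sub par R (c1 q)) < card (sub par R q)"
      using psubset_card_mono[OF fin] ss qin qn by blast
    then show ?thesis using less.hyps on by blast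
  qed
qed

end

context ctree begin

definition good :: "'a set \<Rightarrow> bool" where
  "good R \<longleftrightarrow> R \<subseteq> V \<and> (\<exists>t\<in>R. \<forall>q\<in>R. anc par t q \<and> (\<forall>q'. anc par t q' \<and> anc par q' q \<longrightarrow> q' \<in> R))"

lemma rt_eq: assumes "R \<subseteq> V" "t \<in> R" "\<forall>q\<in>R. anc par t q" shows "rt par R = t"
  unfolding rt_def
proof (rule the_equality)
  show "t \<in> R \<and> (\<forall>w\<in>R. anc par t w)" using assms by blast
next
  fix t' assume "t' \<in> R \<and> (\<forall>w\<in>R. anc par t' w)"
  then show "t' = t" using assms anc_antisym by blast
qed

lemma c1_inj: assumes "hlm R a" "hlm R' b" "a \<in> V" "b \<in> V" "c1 a = c1 b" shows "a = b"
  using hlm_c1(2)[OF assms(1,3)] hlm_c1(2)[OF assms(2,4)] assms(5) by metis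

lemma first_ex: assumes RV: "R \<subseteq> V"
  shows "onp R v q \<Longrightarrow> (\<exists>y. onp R y q \<and> onp R v y \<and> P y) \<Longrightarrow>
    \<exists>f. onp R v f \<and> P f \<and> (\<forall>y. onp R v y \<and> P y \<longrightarrow> onp R f y)"
proof (induction rule: onP.induct)
  case (onP_start v)
  then obtain y where y: "onp R y v" "onp R v y" "P y" by blast
  then have "y = v" using onp_antisym RV by blast
  then show ?case using y by blast
next
  case (onP_step v w)
  obtain y where y: "onp R y (c1 w)" "onp R v y" "P y" using onP_step(4) by blast
  have wV: "w \<in> V" using onp_R[OF onP_step(1)] RV by blast
  have cw: "\<And>w'. onp R y w' \<Longrightarrow> hlm R w' \<Longrightarrow> c1 w = c1 w' \<Longrightarrow> w' = w"
  proof -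
    fix w' assume "onp R y w'" "hlm R w'" "c1 w = c1 w'"
    moreover have "w' \<in> V" using onp_R[OF \<open>onp R y w'\<close>] RV by blast
    ultimately show "w' = w" using c1_inj[OF _ onP_step(2) _ wV] by metis
  qed
  have "c1 w = y \<or> (\<exists>w'. onp R y w' \<and> hlm R w' \<and> c1 w = c1 w')"
    using onp_end_inv[OF y(1)] by blast
  then show ?case
  proof
    assume "\<exists>w'. onp R y w' \<and> hlm R w' \<and> c1 w = c1 w'"
    then have "onp R y w" using cw by blast
    then show ?case using onP_step.IH y by blast
  next
    assume yc: "c1 w = y"
    show ?case
    proof (cases "\<exists>y'. onp R y' w \<and> onp R v y' \<and> P y'")
      case True then show ?thesis using onP_step.IH by blast
    next
      case False
      have "\<forall>y''. onp R v y'' \<and> P y'' \<longrightarrow> onp R y y''"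
      proof (intro allI impI)
        fix y'' assume h: "onp R v y'' \<and> P y''"
        then have "onp R y y'' \<or> onp R y'' y" using onp_lin[OF y(2)] by blast
        then show "onp R y y''"
        proof
          assume "onp R y'' y"
          then have "onp R y'' (c1 w)" using yc by simp
          then have "c1 w = y'' \<or> (\<exists>w'. onp R y'' w' \<and> hlm R w' \<and> c1 w = c1 w')"
            using onp_end_inv by blast
          then show "onp R y y''"
          proof
            assume "c1 w = y''"
            moreover have "y \<in> R" using onp_R[OF y(1)] by blast
            ultimately show ?thesis using yc onP.onP_start by metis
          next
            assume "\<exists>w'. onp R y'' w' \<and> hlm R w' \<and> c1 w = c1 w'"
            then obtain w' where w': "onp R y'' w'" "hlm R w'" "c1 w = c1 w'" by blast
            have "w' \<in> V" using onp_R[OF w'(1)] RV by blast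
            then have "w' = w" using c1_inj[OF w'(2) onP_step(2) _ wV] w'(3) by metis
            then show ?thesis using False h w'(1) by blast
          qed
        qed simp
      qed
      then show ?thesis using y by blast
    qed
  qed
qed

lemma bfirst_on: assumes "bfirst V r par c1 R d v = Some b" "R \<subseteq> V" shows "onp R v b"
proof -
  let ?B = "balanced V r par c1 R d"
  have ex: "\<exists>w. onp R v w \<and> ?B w"
    using assms(1) unfolding bfirst_def by (auto split: if_splits)
  then have b: "b = (THE w. onp R v w \<and> ?B w \<and> (\<forall>y. onp R v y \<and> ?B y \<longrightarrow> anc par w y))"
    using assms(1) unfolding bfirst_def by auto
  obtain q where q: "onp R v q" "?B q" using ex by blast
  have "onp R q q" using onp_R[OF q(1)] onP.onP_start by metis
  then obtain f where f: "onp R v f" "?B f" "\<forall>y. onp R v y \<and> ?B y \<longrightarrow> onp R f y"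
    using first_ex[OF assms(2) q(1), of ?B] q by blast
  have "(THE w. onp R v w \<and> ?B w \<and> (\<forall>y. onp R v y \<and> ?B y \<longrightarrow> anc par w y)) = f"
  proof (rule the_equality)
    show "onp R v f \<and> ?B f \<and> (\<forall>y. onp R v y \<and> ?B y \<longrightarrow> anc par f y)"
      using f onp_anc assms(2) by blast
  next
    fix w assume w: "onp R v w \<and> ?B w \<and> (\<forall>y. onp R v y \<and> ?B y \<longrightarrow> anc par w y)"
    then have "anc par w f" using f by blast
    moreover have "anc par f w" using f w onp_anc assms(2) by blast
    moreover have "f \<in> V" using onp_R[OF f(1)] assms(2) by blast
    ultimately show "w = f" using anc_antisym by blast
  qed
  then show ?thesis using b f by simp
qed

lemma cv_struct: "inCV V r par c1 R d x \<Longrightarrow> R \<subseteq> V \<Longrightarrow>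
   \<exists>w. onp R w x \<and> (w = rt par R \<or> (w \<noteq> r \<and> par w \<in> CV V r par c1 R d))"
proof (induction rule: inCV.induct)
  case (inCV_b R d b)
  then show ?case using bfirst_on by blast
next
  case (inCV_rec R d b w' x)
  have sR: "sub par R w' \<subseteq> R" unfolding sub_def by blast
  then obtain w where w: "onp (sub par R w') w x"
    "w = rt par (sub par R w') \<or> (w \<noteq> r \<and> par w \<in> CV V r par c1 (sub par R w') d)"
    using inCV_rec by blast
  have on: "onp R w x" using onp_mono[OF w(1) sR] .
  have rts: "rt par (sub par R w') = w'"
    by (rule rt_eq) (use sR inCV_rec(3,6) in \<open>auto simp: sub_def\<close>)
  from w(2) show ?case
  proof
    assume "w = rt par (sub par R w')"
    then have ww: "w = w'" using rts by simp
    then have "w \<noteq> r" "par w = b" using inCV_rec(2) unfolding children_def by auto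
    moreover have "b \<in> CV V r par c1 R d" unfolding CV_def using inCV.inCV_b[OF inCV_rec(1)] by simp
    ultimately show ?thesis using on by auto
  next
    assume "w \<noteq> r \<and> par w \<in> CV V r par c1 (sub par R w') d"
    then have "w \<noteq> r" "inCV V r par c1 (sub par R w') d (par w)" unfolding CV_def by auto
    then have "inCV V r par c1 R d (par w)" using inCV.inCV_rec[OF inCV_rec(1,2,3)] by blast
    then show ?thesis using on \<open>w \<noteq> r\<close> unfolding CV_def by auto
  qed
qed

abbreviation "adj A \<equiv> adj_in r par A"

lemma rtc_sym: "(adj A)\<^sup>*\<^sup>* a b \<Longrightarrow> (adj A)\<^sup>*\<^sup>* b a"
proof (induction rule: rtranclp_induct)
  case base then show ?case by simp
next
  case (step y z)
  have "adj A z y" using step(2) unfolding adj_in_def by blast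
  then show ?case using step(3) by (rule converse_rtranclp_into_rtranclp)
qed

lemma comps_class: assumes "K \<in> comps r par A" "a \<in> K" shows "K = {q. (adj A)\<^sup>*\<^sup>* a q}"
proof -
  obtain x where x: "x \<in> A" "K = {y. (adj A)\<^sup>*\<^sup>* x y}" using assms(1) unfolding comps_def by blast
  then have xa: "(adj A)\<^sup>*\<^sup>* x a" using assms(2) by blast
  then have ax: "(adj A)\<^sup>*\<^sup>* a x" by (rule rtc_sym)
  show ?thesis using x(2) xa ax by (auto intro: rtranclp_trans)
qed

lemma rtc_in: "(adj A)\<^sup>*\<^sup>* a q \<Longrightarrow> a \<in> A \<Longrightarrow> q \<in> A"
  by (induction rule: rtranclp_induct) (auto simp: adj_in_def)

lemma comps_sub: assumes "K \<in> comps r par A" shows "K \<subseteq> A" "K \<noteq> {}"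
proof -
  obtain x where x: "x \<in> A" "K = {y. (adj A)\<^sup>*\<^sup>* x y}" using assms(1) unfolding comps_def by blast
  then show "K \<subseteq> A" using rtc_in by blast
  show "K \<noteq> {}" using x by auto
qed

lemma comp_root: assumes AV: "A \<subseteq> V" and K: "K \<in> comps r par A"
  shows "\<exists>z\<in>K. \<forall>q\<in>K. anc par z q \<and> (\<forall>q'. anc par z q' \<and> anc par q' q \<longrightarrow> q' \<in> K)"
proof -
  obtain a where "a \<in> K" using comps_sub[OF K] by blast
  then obtain z where z: "z \<in> K" "\<forall>y. y \<in> K \<longrightarrow> depth z \<le> depth y"
    using ex_has_least_nat[of "\<lambda>y. y \<in> K" a depth] by blast
  have Kz: "K = {q. (adj A)\<^sup>*\<^sup>* z q}" using comps_class[OF K z(1)] .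
  have KA: "K \<subseteq> A" using comps_sub[OF K] by blast
  have "(adj A)\<^sup>*\<^sup>* z q \<Longrightarrow> anc par z q \<and> (\<forall>q'. anc par z q' \<and> anc par q' q \<longrightarrow> (adj A)\<^sup>*\<^sup>* z q')" for q
  proof (induction rule: rtranclp_induct)
    case base
    have "z \<in> V" using z(1) KA AV by blast
    have "\<forall>q'. anc par z q' \<and> anc par q' z \<longrightarrow> (adj A)\<^sup>*\<^sup>* z q'"
    proof (intro allI impI)
      fix q' assume "anc par z q' \<and> anc par q' z"
      then have "q' = z" using anc_antisym[of q' z] \<open>z \<in> V\<close> by blast
      then show "(adj A)\<^sup>*\<^sup>* z q'" by simp
    qed
    then show ?case by simp
  next
    case (step q q2)
    have q2K: "q2 \<in> K" using Kz step(1,2) by auto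
    from step(2) have "(q \<noteq> r \<and> par q = q2) \<or> (q2 \<noteq> r \<and> par q2 = q)" unfolding adj_in_def by blast
    then show ?case
    proof
      assume h: "q \<noteq> r \<and> par q = q2"
      have qV: "q \<in> V" using step(2) AV unfolding adj_in_def by blast
      have "q \<noteq> z"
      proof
        assume "q = z"
        then have "depth q2 < depth z" using depth_par[OF qV] h by auto
        then show False using z(2) q2K by fastforce
      qed
      then have "anc par z q2" using anc_step step(3) h by blast
      moreover have "\<forall>q'. anc par z q' \<and> anc par q' q2 \<longrightarrow> (adj A)\<^sup>*\<^sup>* z q'"
        using step(3) h anc_par anc_trans by blast
      ultimately show ?thesis by blast
    next
      assume h: "q2 \<noteq> r \<and> par q2 = q"
      have a2: "anc par q q2" using h anc_par by metis
      then have "anc par z q2" using step(3) anc_trans by blast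
      moreover have "\<forall>q'. anc par z q' \<and> anc par q' q2 \<longrightarrow> (adj A)\<^sup>*\<^sup>* z q'"
      proof (intro allI impI)
        fix q' assume q': "anc par z q' \<and> anc par q' q2"
        show "(adj A)\<^sup>*\<^sup>* z q'"
        proof (cases "q' = q2")
          case True then show ?thesis using step(1,2) by auto
        next
          case False
          then have "anc par q' q" using anc_step q' h by blast
          then show ?thesis using step(3) q' by blast
        qed
      qed
      ultimately show ?thesis by blast
    qed
  qed
  then show ?thesis using z(1) Kz by blast
qed

lemma good_V: "good V"
  unfolding good_def using rV anc_r anc_V by blast

lemma good_comp: assumes "A \<subseteq> V" "K \<in> comps r par A" shows "good K"
  unfolding good_def using comp_root[OF assms] comps_sub[OF assms(2)] assms(1) by blast

lemma canonical_good: "canonical V r par c1 k R \<Longrightarrow> good R"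
proof (induction rule: canonical.induct)
  case canon_T then show ?case by (rule good_V)
next
  case (canon_comp R K)
  have "R - CR V r par c1 k R \<subseteq> V" using canon_comp(3) unfolding good_def by blast
  then show ?case using good_comp canon_comp(2) by blast
qed

end

context ctree begin

lemma find_z: "onp R w q \<Longrightarrow> (w \<in> A \<Longrightarrow> w = r \<or> par w \<notin> A) \<Longrightarrow> R \<subseteq> V \<Longrightarrow> onp R q y \<Longrightarrow>
   (\<forall>q'. onp R q q' \<and> onp R q' y \<longrightarrow> q' \<in> A) \<Longrightarrow>
   \<exists>z. onp R z y \<and> (\<forall>q'. onp R z q' \<and> onp R q' y \<longrightarrow> q' \<in> A) \<and> z \<in> A \<and> (z = r \<or> par z \<notin> A)"
proof (induction rule: onP.induct)
  case (onP_start v)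
  have "onp R v v" using onP_start(1) by (rule onP.onP_start)
  then have "v \<in> A" using onP_start by blast
  then show ?case using onP_start by blast
next
  case (onP_step v q)
  have qR: "q \<in> R" using onp_R[OF onP_step(1)] by blast
  then have qV: "q \<in> V" using onP_step(5) by blast
  note h = hlm_c1[OF onP_step(2) qV]
  have cA: "c1 q \<in> A" using onP_step(6,7) onP.onP_start[OF h(4)] by blast
  show ?case
  proof (cases "q \<in> A")
    case False
    then show ?thesis using onP_step(6,7) cA h(2) by (intro exI[of _ "c1 q"]) auto
  next
    case True
    have qq: "onp R q (c1 q)" using onP.onP_step[OF onP.onP_start[OF qR] onP_step(2)] .
    have qy: "onp R q y" using onp_trans[OF onP_step(6) qq] .
    have "\<forall>q'. onp R q q' \<and> onp R q' y \<longrightarrow> q' \<in> A"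
    proof (intro allI impI)
      fix q' assume q': "onp R q q' \<and> onp R q' y"
      then have "q' = q \<or> (hlm R q \<and> onp R (c1 q) q')" using onp_start_inv by blast
      then show "q' \<in> A" using True q' onP_step(7) by blast
    qed
    then show ?thesis using onP_step.IH onP_step(4,5) qy by blast
  qed
qed

lemma chain_adj: "onp R a q \<Longrightarrow> R \<subseteq> V \<Longrightarrow> onp R q y \<Longrightarrow>
   (\<forall>q'. onp R a q' \<and> onp R q' y \<longrightarrow> q' \<in> A) \<Longrightarrow> (adj A)\<^sup>*\<^sup>* a q"
proof (induction rule: onP.induct)
  case (onP_start v) then show ?case by simp
next
  case (onP_step v q)
  have qR: "q \<in> R" using onp_R[OF onP_step(1)] by blast
  then have qV: "q \<in> V" using onP_step(4) by blast
  note h = hlm_c1[OF onP_step(2) qV]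
  have qq: "onp R q (c1 q)" using onP.onP_step[OF onP.onP_start[OF qR] onP_step(2)] .
  have qy: "onp R q y" using onp_trans[OF onP_step(5) qq] .
  have vc: "onp R v (c1 q)" using onP.onP_step[OF onP_step(1,2)] .
  have "(adj A)\<^sup>*\<^sup>* v q" using onP_step.IH onP_step(4,6) qy by blast
  moreover have "q \<in> A" using onP_step(1,6) qy by blast
  moreover have "c1 q \<in> A" using vc onP_step(5,6) by blast
  ultimately show ?case using h(2,3) unfolding adj_in_def
    by (metis (mono_tags, lifting) rtranclp.rtrancl_into_rtrancl)
qed

lemma chain_K: "onp R a q \<Longrightarrow> onp R q y \<Longrightarrow>
   (\<forall>q'. onp R a q' \<and> onp R q' y \<longrightarrow> q' \<in> K) \<Longrightarrow> onp K a q"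
proof (induction rule: onP.induct)
  case (onP_start v)
  have "onp R v v" using onP_start(1) by (rule onP.onP_start)
  then have "v \<in> K" using onP_start(2,3) by blast
  then show ?case by (rule onP.onP_start)
next
  case (onP_step v q)
  have qR: "q \<in> R" using onp_R[OF onP_step(1)] by blast
  have qq: "onp R q (c1 q)" using onP.onP_step[OF onP.onP_start[OF qR] onP_step(2)] .
  have qy: "onp R q y" using onp_trans[OF onP_step(4) qq] .
  have vc: "onp R v (c1 q)" using onP.onP_step[OF onP_step(1,2)] .
  have "onp K v q" using onP_step.IH onP_step(5) qy by blast
  moreover have "hlm K q" using onP_step(2,4,5) vc unfolding has_lm_def by blast
  ultimately show ?case by (rule onP.onP_step)
qed

lemma good_root: assumes "good R" obtains t where "t \<in> R" "rt par R = t"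
  "\<forall>q\<in>R. anc par t q \<and> (\<forall>q'. anc par t q' \<and> anc par q' q \<longrightarrow> q' \<in> R)"
proof -
  obtain t where t: "t \<in> R" "\<forall>q\<in>R. anc par t q \<and> (\<forall>q'. anc par t q' \<and> anc par q' q \<longrightarrow> q' \<in> R)"
    using assms unfolding good_def by blast
  moreover have "rt par R = t" using rt_eq t assms unfolding good_def by blast
  ultimately show ?thesis using that by blast
qed

lemma lR_on: assumes "good R" shows "onp R (rt par R) (lR V r par c1 R)"
proof -
  obtain t where t: "t \<in> R" "rt par R = t" using good_root[OF assms] by blast
  have RV: "R \<subseteq> V" using assms unfolding good_def by blast
  have "onp R t t" using t(1) by (rule onP.onP_start)
  then obtain e where e: "onp R t e" "\<not> hlm R e" using lend_ex[OF RV] by blast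
  then have "lend V r par c1 R t = e" by (rule lend_eq)
  then show ?thesis using e t unfolding lR_def by simp
qed

lemma CR_sub: assumes "good R" shows "CR V r par c1 k R \<subseteq> R"
proof -
  have RV: "R \<subseteq> V" using assms unfolding good_def by blast
  obtain t where t: "t \<in> R" "rt par R = t" using good_root[OF assms] by blast
  have "CV V r par c1 R d \<subseteq> R" for d
  proof
    fix x assume "x \<in> CV V r par c1 R d"
    then obtain w where "onp R w x" using cv_struct[OF _ RV] unfolding CV_def by blast
    then show "x \<in> R" using onp_R by blast
  qed
  moreover have "lR V r par c1 R \<in> R" using lR_on[OF assms] onp_R by blast
  ultimately show ?thesis using t unfolding CR_def Let_def by auto
qed

lemma main: assumes gR: "good R" and xC: "x \<in> CR V r par c1 k R" and xr: "x \<noteq> r"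
  and K: "K \<in> comps r par (R - CR V r par c1 k R)" and yK: "par x \<in> K"
  shows "par x = lR V r par c1 K"
proof -
  define C where "C = CR V r par c1 k R"
  define A where "A = R - C"
  define y where "y = par x"
  have RV: "R \<subseteq> V" using gR unfolding good_def by blast
  obtain t where t: "t \<in> R" "rt par R = t"
    "\<forall>q\<in>R. anc par t q \<and> (\<forall>q'. anc par t q' \<and> anc par q' q \<longrightarrow> q' \<in> R)"
    using good_root[OF gR] by blast
  have KA: "K \<subseteq> A" using comps_sub[OF K] unfolding A_def C_def by blast
  have yA: "y \<in> A" using KA yK y_def by blast
  define d where "d = real (card R) / real k"
  have ns: "\<not> real k \<ge> real (card R) / 2 - 1"
  proof
    assume "real k \<ge> real (card R) / 2 - 1"
    then have "C = R" unfolding C_def CR_def Let_def by simp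
    then show False using yA A_def by blast
  qed
  then have Ceq: "C = CV V r par c1 R d \<union> {lR V r par c1 R, t}"
    unfolding C_def CR_def Let_def d_def using t(2) by simp
  have xt: "x \<noteq> t"
  proof
    assume xt: "x = t"
    have "y \<in> R" using yA A_def by blast
    then have "anc par t y" using t by blast
    moreover have "anc par y t" using xt y_def anc_par by metis
    moreover have "t \<in> V" using t RV by blast
    ultimately have "y = t" using anc_antisym by blast
    then have "par t = t" using xt y_def by simp
    then show False using par_ne \<open>t \<in> V\<close> xt xr by blast
  qed
  have "\<exists>w. onp R w x \<and> x \<noteq> w \<and> (w \<in> A \<longrightarrow> w = r \<or> par w \<notin> A)"
  proof -
    have "x \<in> CV V r par c1 R d \<or> x = lR V r par c1 R" using xC xt Ceq C_def by blast
    then show ?thesis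
    proof
      assume "x \<in> CV V r par c1 R d"
      then obtain w where w: "onp R w x" "w = rt par R \<or> (w \<noteq> r \<and> par w \<in> CV V r par c1 R d)"
        using cv_struct[OF _ RV] unfolding CV_def by blast
      from w(2) show ?thesis
      proof
        assume "w = rt par R"
        then have "w = t" using t by simp
        then show ?thesis using w(1) xt Ceq A_def by blast
      next
        assume h: "w \<noteq> r \<and> par w \<in> CV V r par c1 R d"
        then have "par w \<notin> A" using Ceq A_def by blast
        moreover have "x \<noteq> w" using h yA y_def Ceq A_def by blast
        ultimately show ?thesis using w(1) by blast
      qed
    next
      assume "x = lR V r par c1 R"
      then have "onp R t x" using lR_on[OF gR] t by simp
      then show ?thesis using xt Ceq A_def by blast
    qed
  qed
  then obtain w where w: "onp R w x" "x \<noteq> w" "w \<in> A \<longrightarrow> w = r \<or> par w \<notin> A" by blast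
  obtain y' where y': "onp R w y'" "hlm R y'" "x = c1 y'" using onp_end_inv[OF w(1)] w(2) by blast
  have y'V: "y' \<in> V" using onp_R[OF y'(1)] RV by blast
  have "par x = y'" using hlm_c1(2)[OF y'(2) y'V] y'(3) by simp
  then have yy: "y' = y" using y_def by simp
  have wy: "onp R w y" using y' yy by simp
  have hy: "hlm R y" and cy: "c1 y = x" using y' yy by auto
  have yR: "y \<in> R" using onp_R[OF wy] by blast
  have yyy: "onp R y y" using yR by (rule onP.onP_start)
  have btw: "\<forall>q'. onp R y q' \<and> onp R q' y \<longrightarrow> q' \<in> A"
    using onp_antisym RV yA by blast
  obtain z where z: "onp R z y" "\<forall>q'. onp R z q' \<and> onp R q' y \<longrightarrow> q' \<in> A" "z \<in> A"
     "z = r \<or> par z \<notin> A"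
    using find_z[OF wy _ RV yyy btw] w(3) by blast
  have zy: "(adj A)\<^sup>*\<^sup>* z y" using chain_adj[OF z(1) RV yyy] z(2) by blast
  have KAeq: "K \<in> comps r par A" using K unfolding A_def C_def .
  have Ky: "K = {q. (adj A)\<^sup>*\<^sup>* y q}" using comps_class[OF KAeq] yK y_def by simp
  have zK: "z \<in> K" using Ky rtc_sym[OF zy] by simp
  have Kz: "K = {q. (adj A)\<^sup>*\<^sup>* z q}" using comps_class[OF KAeq zK] .
  have chK: "\<forall>q'. onp R z q' \<and> onp R q' y \<longrightarrow> q' \<in> K"
  proof (intro allI impI)
    fix q' assume q': "onp R z q' \<and> onp R q' y"
    then have "(adj A)\<^sup>*\<^sup>* z q'" using chain_adj[of R z q' y A] RV z(2) by blast
    then show "q' \<in> K" using Kz by simp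
  qed
  have onK: "onp K z y" using chain_K[OF z(1) yyy chK] .
  have nh: "\<not> hlm K y"
  proof
    assume "hlm K y"
    then have "x \<in> K" using cy unfolding has_lm_def by simp
    then show False using KA A_def C_def xC by blast
  qed
  have AV: "A \<subseteq> V" using RV A_def by blast
  have anz: "(adj A)\<^sup>*\<^sup>* z q \<Longrightarrow> anc par z q" for q
  proof (induction rule: rtranclp_induct)
    case base then show ?case by simp
  next
    case (step q q2)
    from step(2) have "(q \<noteq> r \<and> par q = q2) \<or> (q2 \<noteq> r \<and> par q2 = q)" unfolding adj_in_def by blast
    then show ?case
    proof
      assume h: "q \<noteq> r \<and> par q = q2"
      have "q \<noteq> z"
      proof
        assume "q = z"
        then show False using z(4) h step(2) unfolding adj_in_def by blast
      qed
      then show ?thesis using anc_step step(3) h by blast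
    next
      assume h: "q2 \<noteq> r \<and> par q2 = q"
      then have "anc par q q2" using anc_par by metis
      then show ?thesis using step(3) anc_trans by blast
    qed
  qed
  have "rt par K = z"
    by (rule rt_eq) (use KA AV zK anz Kz in auto)
  then have "lR V r par c1 K = lend V r par c1 K z" unfolding lR_def by simp
  also have "\<dots> = y" using lend_eq[OF onK nh] .
  finally show ?thesis using y_def by simp
qed

end

theorem lemma6:
  fixes V :: "'a set" and r :: 'a and par c1 :: "'a \<Rightarrow> 'a" and k :: nat
    and u v x :: 'a and Tu Tv T' :: "'a set"
  assumes tree: "is_rooted_tree V r par"
    and lm: "leftmost_choice V r par c1"
    and k4: "k \<ge> 4"
    and uV: "u \<in> V" and vV: "v \<in> V"
    and desc: "anc par v u"
    and Tu: "canonical V r par c1 k Tu" "u \<in> CR V r par c1 k Tu"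
    and Tv: "canonical V r par c1 k Tv" "v \<in> CR V r par c1 k Tv"
    and sub: "Tv \<subseteq> Tu"
    and T': "T' \<in> comps r par (Tu - CR V r par c1 k Tu)" "v \<in> T'"
    and xX: "x \<in> CR V r par c1 k Tu" "anc par v x" "anc par x u"
    and xhigh: "\<forall>y. y \<in> CR V r par c1 k Tu \<and> anc par v y \<and> anc par y u \<longrightarrow> anc par x y"
  shows "x \<noteq> r \<and> (par x = rt par T' \<or> par x = lR V r par c1 T')"
proof -
  interpret ctree V r par c1 using tree lm by unfold_locales
  define A where "A = Tu - CR V r par c1 k Tu"
  have gR: "good Tu" using canonical_good[OF Tu(1)] .
  have RV: "Tu \<subseteq> V" using gR unfolding good_def by blast
  obtain t where t: "t \<in> Tu" "rt par Tu = t"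
    "\<forall>q\<in>Tu. anc par t q \<and> (\<forall>q'. anc par t q' \<and> anc par q' q \<longrightarrow> q' \<in> Tu)"
    using good_root[OF gR] by blast
  have CRs: "CR V r par c1 k Tu \<subseteq> Tu" using CR_sub[OF gR] .
  have vA: "v \<in> A" using comps_sub(1)[OF T'(1)] T'(2) unfolding A_def by blast
  have xv: "x \<noteq> v" using vA xX(1) unfolding A_def by blast
  have xr: "x \<noteq> r"
  proof
    assume "x = r"
    then have "anc par v r" using xX(2) by simp
    then have "v = r" using anc_antisym[of v r] anc_r[OF vV] rV by blast
    then show False using xv \<open>x = r\<close> by simp
  qed
  have xT: "x \<in> Tu" using CRs xX(1) by blast
  have xV: "x \<in> V" using xT RV by blast
  have inA: "q \<in> A" if q: "anc par v q" "anc par q (par x)" for q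
  proof -
    have "anc par t v" using t(3) vA unfolding A_def by blast
    then have tq: "anc par t q" using q(1) anc_trans by blast
    have qx: "anc par q x" using q(2) anc_par anc_trans by blast
    have qT: "q \<in> Tu" using t(3) xT tq qx by blast
    have "q \<notin> CR V r par c1 k Tu"
    proof
      assume "q \<in> CR V r par c1 k Tu"
      moreover have "anc par q u" using qx xX(3) anc_trans by blast
      ultimately have "anc par x q" using xhigh q(1) by blast
      then have "anc par x (par x)" using q(2) anc_trans by blast
      then have "par x = x" using anc_antisym[of "par x" x] anc_par xV by blast
      then show False using par_ne xV xr by blast
    qed
    then show ?thesis using qT unfolding A_def by blast
  qed
  have adjv: "\<And>q. (par ^^ n) q = v \<Longrightarrow> anc par q (par x) \<Longrightarrow> (adj A)\<^sup>*\<^sup>* v q" for n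
  proof (induction n)
    case 0 then show ?case by simp
  next
    case (Suc n q)
    have pn: "(par ^^ n) (par q) = v" using Suc(2) by (simp only: funpow_Suc_right o_apply)
    have ap: "anc par (par q) (par x)" using Suc(3) anc_par anc_trans by blast
    have IH: "(adj A)\<^sup>*\<^sup>* v (par q)" using Suc.IH[OF pn ap] .
    show ?case
    proof (cases "q = r")
      case True then show ?thesis using IH par_r by simp
    next
      case False
      have "anc par v q" using Suc(2) unfolding anc_def by blast
      then have qA: "q \<in> A" using inA Suc(3) by blast
      have "anc par v (par q)" using pn unfolding anc_def by blast
      then have pA: "par q \<in> A" using inA ap by blast
      have "adj A (par q) q" using qA pA False unfolding adj_in_def by blast
      then show ?thesis by (rule rtranclp.rtrancl_into_rtrancl[OF IH])
    qed
  qed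
  have "anc par v (par x)" using anc_step[OF xX(2)] xv by metis
  then obtain n where "(par ^^ n) (par x) = v" unfolding anc_def by blast
  then have "(adj A)\<^sup>*\<^sup>* v (par x)" using adjv anc_refl by blast
  moreover have "T' = {q. (adj A)\<^sup>*\<^sup>* v q}" using comps_class[OF _ T'(2)] T'(1) unfolding A_def by blast
  ultimately have "par x \<in> T'" by blast
  then have "par x = lR V r par c1 T'" using main[OF gR xX(1) xr T'(1)] by blast
  then show ?thesis using xr by blast
qed

end
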